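(* Let $\pi$ be a chunking policy, $\epsilon>0$, $\rho_T\sim\mathcal{D}_{\mathrm{exp}}$, $\rho'_T\sim\mathcal{D}_\pi$, and let $J$ be a real-valued cost on length-$T$ trajectories. (a) If $\sup_\rho|J(\rho)|\le B$ and $J$ is $L$-Lipschitz in the Euclidean norm (viewing $\rho_T$ as a vector in $\mathbb{R}^{(T+1)d_x+Td_u}$), then $|\mathbb{E}J(\rho_T)-\mathbb{E}J(\rho'_T)|\le\sqrt{2T}L\epsilon+2B\,\mathrm{Imit}_{\mathrm{joint},\epsilon}(\pi)$. (b) If $J(\rho)=c_{T+1}(x_{T+1})+\sum_{t=1}^T\big(c_t(x_t)+c'_t(u_t)\big)$ where all $c_t,c'_t$ are $L$-Lipschitz and bounded in absolute value by $B$, then $|\mathbb{E}J(\rho_T)-\mathbb{E}J(\rho'_T)|\le 4TB\,\mathrm{Imit}_{\mathrm{marg},\epsilon}(\pi)+2TL\epsilon$. (c) If $J(\rho)=c_{T+1}(x_{T+1})$ with $c_{T+1}$ $L$-Lipschitz and bounded in absolute value by $B$, then $|\mathbb{E}J(\rho_T)-\mathbb{E}J(\rho'_T)|\le 2B\,\mathrm{Imit}_{\mathrm{fin},\epsilon}(\pi)+L\epsilon$.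
   Context: Dynamics $x_{t+1}=f(x_t,u_t)$, $x_t\in\mathbb{R}^{d_x}$, $u_t\in\mathbb{R}^{d_u}$. Trajectories $\rho_T=(x_{1:T+1},u_{1:T})$. Primitive controllers $\kappa(x)=\bar u+\bar K(x-\bar x)$; with $T=H\tau_c$, $t_h=(h-1)\tau_c+1$ and $\tau_o\le\tau_c$, observation chunks are $o_h=(x_{t_h-\tau_o+1:t_h},u_{t_h-\tau_o+1:t_h-1})$ for $h>1$, $o_1=(0,\dots,0,x_1)$, and composite actions are $a_h=(\kappa_{t_h},\dots,\kappa_{t_{h+1}-1})$. A chunking policy is a sequence of kernels $\pi_h$ from observation chunks to distributions over composite actions; $\mathcal{D}_\pi$ is the trajectory law when $x_1$ is drawn from the law of $x_1$ under $\mathcal{D}_{\mathrm{exp}}$, $a_h\sim\pi_h(o_h)$ with fresh randomness, and $u_t=\kappa_t(x_t)$ for $t_h\le t<t_{h+1}$. $\mathcal{D}_{\mathrm{exp}}$ is a given distribution over trajectories. In all infima below, $\mu$ ranges over couplings of $\mathcal{D}_{\mathrm{exp}}$ (trajectory $x^{\mathrm{exp}},u^{\mathrm{exp}}$) and $\mathcal{D}_\pi$ (trajectory $x^\pi,u^\pi$) with $x^{\mathrm{exp}}_1=x^\pi_1$ a.s.: $\mathrm{Imit}_{\mathrm{joint},\epsilon}(\pi)=\inf_\mu\Pr_\mu[\max_{t\in[T]}\max\{\|x^{\mathrm{exp}}_{t+1}-x^\pi_{t+1}\|,\|u^{\mathrm{exp}}_t-u^\pi_t\|\}>\epsilon]$;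 $\mathrm{Imit}_{\mathrm{marg},\epsilon}(\pi)=\max_{t\in[T]}\inf_\mu\Pr_\mu[\max\{\|x^{\mathrm{exp}}_{t+1}-x^\pi_{t+1}\|,\|u^{\mathrm{exp}}_t-u^\pi_t\|\}>\epsilon]$; $\mathrm{Imit}_{\mathrm{fin},\epsilon}(\pi)=\inf_\mu\Pr_\mu[\|x^{\mathrm{exp}}_{T+1}-x^\pi_{T+1}\|>\epsilon]$. *)

theory Defs
  imports "HOL-Probability.Probability"
begin

text \<open>States are in real^'n (Euclidean norm), inputs in real^'m.
  A trajectory (x_{1..T+1}, u_{1..T}) is a pair of functions on nat, extensional
  on {1..T+1} resp. {1..T}.\<close>

type_synonym ('n,'m) traj = "(nat \<Rightarrow> real^'n) \<times> (nat \<Rightarrow> real^'m)"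

text \<open>Primitive controller kappa(x) = ubar + Kbar (x - xbar), stored as (ubar, Kbar, xbar).\<close>
type_synonym ('n,'m) ctrl = "(real^'m) \<times> (real^'n^'m) \<times> (real^'n)"

definition ctrl_apply :: "('n::finite,'m::finite) ctrl \<Rightarrow> real^'n \<Rightarrow> real^'m" where
  "ctrl_apply k x = (case k of (ub, K, xb) \<Rightarrow> ub + K *v (x - xb))"

definition traj_space :: "nat \<Rightarrow> ('n::finite,'m::finite) traj measure" where
  "traj_space T = (\<Pi>\<^sub>M t\<in>{1..T+1}. borel) \<Otimes>\<^sub>M (\<Pi>\<^sub>M t\<in>{1..T}. borel)"

text \<open>Observation chunk o_h = (x_{t_h-tau_o+1..t_h}, u_{t_h-tau_o+1..t_h-1}), indexed by
  i in {1..tau_o} (resp. {1..tau_o-1}) as x_{t_h-tau_o+i}, u_{t_h-tau_o+i}.\<close>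
definition obs_space :: "nat \<Rightarrow> ((nat \<Rightarrow> real^'n::finite) \<times> (nat \<Rightarrow> real^'m::finite)) measure" where
  "obs_space tau_o = (\<Pi>\<^sub>M i\<in>{1..tau_o}. borel) \<Otimes>\<^sub>M (\<Pi>\<^sub>M i\<in>{1..tau_o-1}. borel)"

text \<open>Composite action a_h = (kappa_{t_h}, ..., kappa_{t_{h+1}-1}), indexed by j in {0..<tau_c}
  as kappa_{t_h+j}.\<close>
definition act_space :: "nat \<Rightarrow> (nat \<Rightarrow> ('n::finite,'m::finite) ctrl) measure" where
  "act_space tau_c = (\<Pi>\<^sub>M j\<in>{0..<tau_c}. borel)"

definition chunk_start :: "nat \<Rightarrow> nat \<Rightarrow> nat" where
  "chunk_start tau_c h = (h - 1) * tau_c + 1"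

definition obs :: "nat \<Rightarrow> nat \<Rightarrow> nat \<Rightarrow> ('n::finite,'m::finite) traj
    \<Rightarrow> (nat \<Rightarrow> real^'n) \<times> (nat \<Rightarrow> real^'m)" where
  "obs tau_c tau_o h \<rho> =
     (if h = 1 then ((\<lambda>i\<in>{1..tau_o}. if i = tau_o then fst \<rho> 1 else 0), (\<lambda>i\<in>{1..tau_o-1}. 0))
      else ((\<lambda>i\<in>{1..tau_o}. fst \<rho> (chunk_start tau_c h + i - tau_o)),
            (\<lambda>i\<in>{1..tau_o-1}. snd \<rho> (chunk_start tau_c h + i - tau_o))))"

primrec chunk_roll :: "(real^'n \<Rightarrow> real^'m \<Rightarrow> real^'n) \<Rightarrow> nat \<Rightarrow> (nat \<Rightarrow> ('n::finite,'m::finite) ctrl)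
    \<Rightarrow> nat \<Rightarrow> ('n,'m) traj \<Rightarrow> ('n,'m) traj" where
  "chunk_roll f t0 a 0 \<rho> = \<rho>"
| "chunk_roll f t0 a (Suc k) \<rho> =
     (let \<rho>' = chunk_roll f t0 a k \<rho>; t = t0 + k; x = fst \<rho>' t; u = ctrl_apply (a k) x
      in ((fst \<rho>')(t + 1 := f x u), (snd \<rho>')(t := u)))"

definition traj_init :: "nat \<Rightarrow> real^'n::finite \<Rightarrow> ('n,'m::finite) traj" where
  "traj_init T x1 = ((\<lambda>t\<in>{1..T+1}. if t = 1 then x1 else 0), (\<lambda>t\<in>{1..T}. 0))"

text \<open>Law of the partial trajectory after h chunks; policy_law ... H is D_pi.\<close>
primrec policy_law :: "(real^'n \<Rightarrow> real^'m \<Rightarrow> real^'n) \<Rightarrow> ('n::finite,'m::finite) traj measure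
    \<Rightarrow> (nat \<Rightarrow> (nat \<Rightarrow> real^'n) \<times> (nat \<Rightarrow> real^'m) \<Rightarrow> (nat \<Rightarrow> ('n,'m) ctrl) measure)
    \<Rightarrow> nat \<Rightarrow> nat \<Rightarrow> nat \<Rightarrow> nat \<Rightarrow> ('n,'m) traj measure" where
  "policy_law f Dexp \<pi> T tau_c tau_o 0 = distr Dexp (traj_space T) (\<lambda>\<rho>. traj_init T (fst \<rho> 1))"
| "policy_law f Dexp \<pi> T tau_c tau_o (Suc h) =
     policy_law f Dexp \<pi> T tau_c tau_o h \<bind>
       (\<lambda>\<rho>. distr (\<pi> (Suc h) (obs tau_c tau_o (Suc h) \<rho>)) (traj_space T)
               (\<lambda>a. chunk_roll f (chunk_start tau_c (Suc h)) a tau_c \<rho>))"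

definition couplings :: "nat \<Rightarrow> ('n::finite,'m::finite) traj measure \<Rightarrow> ('n,'m) traj measure
    \<Rightarrow> (('n,'m) traj \<times> ('n,'m) traj) measure set" where
  "couplings T P Q = {\<mu>. prob_space \<mu> \<and> sets \<mu> = sets (traj_space T \<Otimes>\<^sub>M traj_space T)
      \<and> distr \<mu> (traj_space T) fst = P \<and> distr \<mu> (traj_space T) snd = Q
      \<and> (AE z in \<mu>. fst (fst z) 1 = fst (snd z) 1)}"

definition Imit_joint :: "nat \<Rightarrow> real \<Rightarrow> ('n::finite,'m::finite) traj measure \<Rightarrow> ('n,'m) traj measure \<Rightarrow> ennreal" where
  "Imit_joint T \<epsilon> P Q = (INF \<mu>\<in>couplings T P Q. emeasure \<mu> {z\<in>space \<mu>.
       \<exists>t\<in>{1..T}. max (dist (fst (fst z) (t+1)) (fst (snd z) (t+1))) (dist (snd (fst z) t) (snd (snd z) t)) > \<epsilon>})"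

definition Imit_marg :: "nat \<Rightarrow> real \<Rightarrow> ('n::finite,'m::finite) traj measure \<Rightarrow> ('n,'m) traj measure \<Rightarrow> ennreal" where
  "Imit_marg T \<epsilon> P Q = (SUP t\<in>{1..T}. INF \<mu>\<in>couplings T P Q. emeasure \<mu> {z\<in>space \<mu>.
       max (dist (fst (fst z) (t+1)) (fst (snd z) (t+1))) (dist (snd (fst z) t) (snd (snd z) t)) > \<epsilon>})"

definition Imit_fin :: "nat \<Rightarrow> real \<Rightarrow> ('n::finite,'m::finite) traj measure \<Rightarrow> ('n,'m) traj measure \<Rightarrow> ennreal" where
  "Imit_fin T \<epsilon> P Q = (INF \<mu>\<in>couplings T P Q. emeasure \<mu> {z\<in>space \<mu>.
       dist (fst (fst z) (T+1)) (fst (snd z) (T+1)) > \<epsilon>})"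

definition traj_dist :: "nat \<Rightarrow> ('n::finite,'m::finite) traj \<Rightarrow> ('n,'m) traj \<Rightarrow> real" where
  "traj_dist T \<rho> \<rho>' = sqrt ((\<Sum>t=1..T+1. (dist (fst \<rho> t) (fst \<rho>' t))\<^sup>2) + (\<Sum>t=1..T. (dist (snd \<rho> t) (snd \<rho>' t))\<^sup>2))"

end

theory Submission
  imports Defs
begin



lemma INF_bound_ennreal:
  fixes e :: "'a \<Rightarrow> ennreal" and r :: real and c a :: ennreal
  assumes "S \<noteq> {}" "\<And>\<mu>. \<mu> \<in> S \<Longrightarrow> a \<le> ennreal r * e \<mu> + c"
  shows "a \<le> ennreal r * (INF \<mu>\<in>S. e \<mu>) + c"
proof -
  have "(\<lambda>x::ennreal. ennreal r * x + c) (Inf (e ` S)) = (INF s\<in>e ` S. ennreal r * s + c)"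
  proof (rule continuous_at_Inf_mono)
    show "continuous (at_right (\<Sqinter> (e ` S))) (\<lambda>x. ennreal r * x + c)"
    proof -
      have "continuous_on UNIV (\<lambda>x::ennreal. ennreal r * x + c)"
        by (intro continuous_on_add continuous_on_const ennreal_continuous_on_cmult continuous_on_id) simp
      then show ?thesis
        by (metis UNIV_I continuous_on_eq_continuous_within continuous_within_subset subset_UNIV)
    qed
  qed (use assms(1) in \<open>auto simp: mono_def intro!: add_mono mult_left_mono\<close>)
  moreover have "a \<le> (INF s\<in>e ` S. ennreal r * s + c)"
    using assms by (auto intro!: INF_greatest)
  ultimately show ?thesis by (simp add: image_comp)
qed

lemma coupling_core:
  fixes \<mu> :: "'a measure" and G :: "'a \<Rightarrow> real"
  assumes "prob_space \<mu>" "G \<in> borel_measurable \<mu>" "\<forall>z\<in>space \<mu>. \<bar>G z\<bar> \<le> K"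
    "AE z in \<mu>. z \<notin> E \<longrightarrow> \<bar>G z\<bar> \<le> C" "E \<in> sets \<mu>" "0 \<le> C" "0 \<le> K"
  shows "ennreal \<bar>\<integral>z. G z \<partial>\<mu>\<bar> \<le> ennreal K * emeasure \<mu> E + ennreal C"
proof -
  interpret prob_space \<mu> by fact
  have iG: "integrable \<mu> G"
    using assms(2,3) by (intro integrable_const_bound[where B=K]) auto
  have iI: "integrable \<mu> (\<lambda>z. K * indicator E z + C)"
    using assms(5) by (intro Bochner_Integration.integrable_add integrable_mult_right integrable_real_indicator) (auto simp: less_top[symmetric])
  have "\<bar>\<integral>z. G z \<partial>\<mu>\<bar> \<le> (\<integral>z. \<bar>G z\<bar> \<partial>\<mu>)" by (rule integral_abs_bound)
  also have "\<dots> \<le> (\<integral>z. K * indicator E z + C \<partial>\<mu>)"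
  proof (rule integral_mono_AE)
    show "integrable \<mu> (\<lambda>z. \<bar>G z\<bar>)" using iG by auto
    show "integrable \<mu> (\<lambda>z. K * indicator E z + C)" by (rule iI)
    show "AE z in \<mu>. \<bar>G z\<bar> \<le> K * indicator E z + C"
      using assms(4) AE_space
    proof eventually_elim
      case (elim z) then show ?case using assms(3,6) by (auto simp: indicator_def)
    qed
  qed
  also have "\<dots> = K * measure \<mu> E + C"
    using assms(5) iI by (subst Bochner_Integration.integral_add)
      (auto simp: prob_space less_top[symmetric] intro!: integrable_mult_right integrable_real_indicator)
  finally have *: "\<bar>\<integral>z. G z \<partial>\<mu>\<bar> \<le> K * measure \<mu> E + C" .
  have "ennreal \<bar>\<integral>z. G z \<partial>\<mu>\<bar> \<le> ennreal (K * measure \<mu> E + C)"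
    using * by (rule ennreal_leI)
  also have "\<dots> = ennreal K * emeasure \<mu> E + ennreal C"
    using assms(6,7) by (simp add: ennreal_plus ennreal_mult emeasure_eq_measure)
  finally show ?thesis .
qed

lemma meas_x[measurable]: "t \<in> {1..T+1} \<Longrightarrow> (\<lambda>\<rho>. fst \<rho> t) \<in> traj_space T \<rightarrow>\<^sub>M (borel :: (real^'n::finite) measure)"
  unfolding traj_space_def by measurable

lemma meas_u[measurable]: "t \<in> {1..T} \<Longrightarrow> (\<lambda>\<rho>. snd \<rho> t) \<in> (traj_space T :: ('n::finite,'m::finite) traj measure) \<rightarrow>\<^sub>M (borel :: (real^'m) measure)"
  unfolding traj_space_def by measurable

lemma coupling_facts:
  assumes "\<mu> \<in> couplings T P Q"
  shows "prob_space \<mu>" "sets \<mu> = sets (traj_space T \<Otimes>\<^sub>M traj_space T)"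
    "space \<mu> = space (traj_space T \<Otimes>\<^sub>M traj_space T)"
    "P = distr \<mu> (traj_space T) fst" "Q = distr \<mu> (traj_space T) snd"
    "AE z in \<mu>. fst (fst z) 1 = fst (snd z) 1"
    "fst \<in> \<mu> \<rightarrow>\<^sub>M traj_space T" "snd \<in> \<mu> \<rightarrow>\<^sub>M traj_space T"
  using assms unfolding couplings_def
  by (auto dest: sets_eq_imp_space_eq simp: measurable_cong_sets[of \<mu> "traj_space T \<Otimes>\<^sub>M traj_space T", OF _ refl])

lemma coupling_diff:
  fixes g :: "('n::finite,'m::finite) traj \<Rightarrow> real"
  assumes "\<mu> \<in> couplings T P Q" "g \<in> borel_measurable (traj_space T)" "\<forall>\<rho>\<in>space (traj_space T). \<bar>g \<rho>\<bar> \<le> B"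
  shows "(\<integral>\<rho>. g \<rho> \<partial>P) - (\<integral>\<rho>. g \<rho> \<partial>Q) = (\<integral>z. g (fst z) - g (snd z) \<partial>\<mu>)"
    "(\<lambda>z. g (fst z) - g (snd z)) \<in> borel_measurable \<mu>"
proof -
  note cf = coupling_facts[OF assms(1)]
  interpret prob_space \<mu> by (rule cf(1))
  have m1: "(\<lambda>z. g (fst z)) \<in> borel_measurable \<mu>" using cf(7) assms(2) by measurable
  have m2: "(\<lambda>z. g (snd z)) \<in> borel_measurable \<mu>" using cf(8) assms(2) by measurable
  have i1: "integrable \<mu> (\<lambda>z. g (fst z))"
    using m1 assms(3) cf(7) by (intro integrable_const_bound[where B=B]) (auto simp: measurable_space)
  have i2: "integrable \<mu> (\<lambda>z. g (snd z))"
    using m2 assms(3) cf(8) by (intro integrable_const_bound[where B=B]) (auto simp: measurable_space)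
  show "(\<lambda>z. g (fst z) - g (snd z)) \<in> borel_measurable \<mu>" using m1 m2 by measurable
  show "(\<integral>\<rho>. g \<rho> \<partial>P) - (\<integral>\<rho>. g \<rho> \<partial>Q) = (\<integral>z. g (fst z) - g (snd z) \<partial>\<mu>)"
    using i1 i2 cf(7,8) assms(2) by (simp add: cf(4,5) integral_distr Bochner_Integration.integral_diff)
qed

lemma lip_meas:
  fixes c :: "'a::metric_space \<Rightarrow> real"
  assumes "\<forall>x y. \<bar>c x - c y\<bar> \<le> L * dist x y"
  shows "c \<in> borel_measurable borel"
proof -
  have "(max 0 L)-lipschitz_on UNIV c"
  proof (rule lipschitz_onI)
    fix x y show "dist (c x) (c y) \<le> max 0 L * dist x y"
      using assms by (smt (verit, best) dist_real_def mult_right_mono zero_le_dist max.cobounded2)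
  qed simp
  then show ?thesis by (intro borel_measurable_continuous_onI lipschitz_on_continuous_on)
qed

lemma lip_bound:
  fixes L d e :: real
  assumes "\<bar>a\<bar> \<le> L * d" "0 \<le> d" "d \<le> e"
  shows "\<bar>a\<bar> \<le> max 0 (L * e)"
proof (cases "L \<ge> 0")
  case True then show ?thesis using assms by (smt (verit) mult_left_mono)
next
  case False then show ?thesis using assms mult_nonpos_nonneg[of L d] by linarith
qed

lemma part_c:
  fixes Dexp Dpi :: "('n::finite,'m::finite) traj measure" and c :: "real^'n \<Rightarrow> real"
  assumes "\<forall>x y. \<bar>c x - c y\<bar> \<le> L * dist x y \<and> \<bar>c x\<bar> \<le> B" "\<epsilon> > 0"
  shows "ennreal \<bar>(\<integral>\<rho>. c (fst \<rho> (T+1)) \<partial>Dexp) - (\<integral>\<rho>. c (fst \<rho> (T+1)) \<partial>Dpi)\<bar>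
           \<le> ennreal (2 * B) * Imit_fin T \<epsilon> Dexp Dpi + ennreal (L * \<epsilon>)"
proof -
  have B0: "0 \<le> B" using assms(1) by (meson abs_ge_zero order_trans)
  have cm: "c \<in> borel_measurable borel" using assms(1) by (intro lip_meas[of _ L]) auto
  show ?thesis
  proof (cases "couplings T Dexp Dpi = {}")
    case True
    then have I: "Imit_fin T \<epsilon> Dexp Dpi = top" by (simp add: Imit_fin_def)
    show ?thesis
    proof (cases "B = 0")
      case True
      then have "\<And>x. c x = 0" using assms(1) by force
      then show ?thesis by simp
    next
      case False
      then show ?thesis using B0 I by (simp add: ennreal_mult_top)
    qed
  next
    case ne: False
    let ?C = "max 0 (L * \<epsilon>)"
    have "ennreal \<bar>(\<integral>\<rho>. c (fst \<rho> (T+1)) \<partial>Dexp) - (\<integral>\<rho>. c (fst \<rho> (T+1)) \<partial>Dpi)\<bar>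
           \<le> ennreal (2 * B) * Imit_fin T \<epsilon> Dexp Dpi + ennreal ?C"
      unfolding Imit_fin_def
    proof (rule INF_bound_ennreal[OF ne])
      fix \<mu> assume mu: "\<mu> \<in> couplings T Dexp Dpi"
      note cf = coupling_facts[OF mu]
      have gm: "(\<lambda>\<rho>. c (fst \<rho> (T+1))) \<in> borel_measurable (traj_space T)"
        using cm by measurable
      note cd = coupling_diff[OF mu gm, of B]
      have Em: "{z \<in> space \<mu>. dist (fst (fst z) (T+1)) (fst (snd z) (T+1)) > \<epsilon>} \<in> sets \<mu>"
      proof -
        have ma: "(\<lambda>z. fst (fst z) (T+1)) \<in> traj_space T \<Otimes>\<^sub>M traj_space T \<rightarrow>\<^sub>M (borel :: (real^'n) measure)"
          by (rule measurable_compose[OF measurable_fst meas_x]) simp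
        have mb: "(\<lambda>z. fst (snd z) (T+1)) \<in> traj_space T \<Otimes>\<^sub>M traj_space T \<rightarrow>\<^sub>M (borel :: (real^'n) measure)"
          by (rule measurable_compose[OF measurable_snd meas_x]) simp
        show ?thesis unfolding cf(2) cf(3) using ma mb by measurable
      qed
      show "ennreal \<bar>(\<integral>\<rho>. c (fst \<rho> (T+1)) \<partial>Dexp) - (\<integral>\<rho>. c (fst \<rho> (T+1)) \<partial>Dpi)\<bar>
           \<le> ennreal (2 * B) * emeasure \<mu> {z \<in> space \<mu>. dist (fst (fst z) (T+1)) (fst (snd z) (T+1)) > \<epsilon>} + ennreal ?C"
        unfolding cd(1)[OF ballI[OF conjunct2[OF spec[OF spec[OF assms(1)]]]]]
      proof (rule coupling_core[OF cf(1)])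
        show "(\<lambda>z. c (fst (fst z) (T + 1)) - c (fst (snd z) (T + 1))) \<in> borel_measurable \<mu>"
          using cd(2) assms(1) by blast
        show "\<forall>z\<in>space \<mu>. \<bar>c (fst (fst z) (T + 1)) - c (fst (snd z) (T + 1))\<bar> \<le> 2 * B"
        proof
          fix z
          have "\<bar>c (fst (fst z) (T + 1))\<bar> \<le> B" "\<bar>c (fst (snd z) (T + 1))\<bar> \<le> B" using assms(1) by auto
          then show "\<bar>c (fst (fst z) (T + 1)) - c (fst (snd z) (T + 1))\<bar> \<le> 2 * B" by linarith
        qed
        show "AE z in \<mu>. z \<notin> {z \<in> space \<mu>. dist (fst (fst z) (T+1)) (fst (snd z) (T+1)) > \<epsilon>} \<longrightarrow>
            \<bar>c (fst (fst z) (T + 1)) - c (fst (snd z) (T + 1))\<bar> \<le> ?C"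
          using AE_space
        proof eventually_elim
          case (elim z)
          then show ?case using assms(1) by (auto intro!: lip_bound)
        qed
      qed (use Em B0 in auto)
    qed
    then show ?thesis by (simp add: ennreal_max_0)
  qed
qed

lemma traj_space_ne: "space (traj_space T) \<noteq> {}"
proof -
  have "((\<lambda>t\<in>{1..T+1}. 0), (\<lambda>t\<in>{1..T}. 0)) \<in> space (traj_space T :: ('n::finite,'m::finite) traj measure)"
    unfolding traj_space_def by (simp add: space_pair_measure space_PiM)
  then show ?thesis by blast
qed

lemma sets_policy_law:
  assumes "sets Dexp = sets (traj_space T)"
  shows "sets (policy_law f Dexp \<pi> T tau_c tau_o h) = sets (traj_space T)"
proof (induction h)
  case 0 then show ?case by simp
next
  case (Suc h)
  have "space (policy_law f Dexp \<pi> T tau_c tau_o h) \<noteq> {}"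
    using sets_eq_imp_space_eq[OF Suc.IH] traj_space_ne by simp
  then show ?case by (simp add: sets_bind[where N="traj_space T"])
qed

lemma ev_meas:
  fixes \<epsilon> :: real
  assumes "t \<in> {1..T}"
  shows "{z\<in>space (traj_space T \<Otimes>\<^sub>M traj_space T :: (('n::finite,'m::finite) traj \<times> ('n,'m) traj) measure).
     max (dist (fst (fst z) (t+1)) (fst (snd z) (t+1))) (dist (snd (fst z) t) (snd (snd z) t)) > \<epsilon>}
     \<in> sets (traj_space T \<Otimes>\<^sub>M traj_space T)"
proof -
  have ma: "(\<lambda>z. fst (fst z) (t+1)) \<in> traj_space T \<Otimes>\<^sub>M traj_space T \<rightarrow>\<^sub>M (borel :: (real^'n) measure)"
    by (rule measurable_compose[OF measurable_fst meas_x]) (use assms in simp)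
  have mb: "(\<lambda>z. fst (snd z) (t+1)) \<in> traj_space T \<Otimes>\<^sub>M traj_space T \<rightarrow>\<^sub>M (borel :: (real^'n) measure)"
    by (rule measurable_compose[OF measurable_snd meas_x]) (use assms in simp)
  have ua: "(\<lambda>z. snd (fst z) t) \<in> (traj_space T \<Otimes>\<^sub>M traj_space T :: (('n::finite,'m::finite) traj \<times> ('n,'m) traj) measure) \<rightarrow>\<^sub>M (borel :: (real^'m) measure)"
    by (rule measurable_compose[OF measurable_fst meas_u]) (use assms in simp)
  have ub: "(\<lambda>z. snd (snd z) t) \<in> (traj_space T \<Otimes>\<^sub>M traj_space T :: (('n::finite,'m::finite) traj \<times> ('n,'m) traj) measure) \<rightarrow>\<^sub>M (borel :: (real^'m) measure)"
    by (rule measurable_compose[OF measurable_snd meas_u]) (use assms in simp)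
  show ?thesis using ma mb ua ub by measurable
qed

lemma traj_dist_bound:
  fixes a b :: "('n::finite,'m::finite) traj"
  assumes "fst a 1 = fst b 1"
    "\<forall>t\<in>{1..T}. \<not> (max (dist (fst a (t+1)) (fst b (t+1))) (dist (snd a t) (snd b t)) > \<epsilon>)" "\<epsilon> > 0"
  shows "traj_dist T a b \<le> sqrt (2 * real T) * \<epsilon>"
proof -
  have s1: "(\<Sum>t=1..T+1. (dist (fst a t) (fst b t))\<^sup>2) = (\<Sum>t=1..T. (dist (fst a (t+1)) (fst b (t+1)))\<^sup>2)"
  proof -
    have "(\<Sum>t=1..T+1. (dist (fst a t) (fst b t))\<^sup>2) = (dist (fst a 1) (fst b 1))\<^sup>2 + (\<Sum>t=Suc 1..Suc T. (dist (fst a t) (fst b t))\<^sup>2)"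
      by (subst sum.atLeast_Suc_atMost) auto
    also have "\<dots> = (\<Sum>t=1..T. (dist (fst a (t+1)) (fst b (t+1)))\<^sup>2)"
      using assms(1) by (subst sum.shift_bounds_cl_Suc_ivl) simp
    finally show ?thesis .
  qed
  have b1: "(\<Sum>t=1..T. (dist (fst a (t+1)) (fst b (t+1)))\<^sup>2) \<le> real T * \<epsilon>\<^sup>2"
  proof -
    have "(\<Sum>t=1..T. (dist (fst a (t+1)) (fst b (t+1)))\<^sup>2) \<le> (\<Sum>t=1..T. \<epsilon>\<^sup>2)"
      using assms(2) by (intro sum_mono power_mono) (auto simp: not_less)
    then show ?thesis by simp
  qed
  have b2: "(\<Sum>t=1..T. (dist (snd a t) (snd b t))\<^sup>2) \<le> real T * \<epsilon>\<^sup>2"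
  proof -
    have "(\<Sum>t=1..T. (dist (snd a t) (snd b t))\<^sup>2) \<le> (\<Sum>t=1..T. \<epsilon>\<^sup>2)"
      using assms(2) by (intro sum_mono power_mono) (auto simp: not_less)
    then show ?thesis by simp
  qed
  have "traj_dist T a b \<le> sqrt (2 * real T * \<epsilon>\<^sup>2)"
    unfolding traj_dist_def s1 using b1 b2 by (intro real_sqrt_le_mono) linarith
  also have "\<dots> = sqrt (2 * real T) * \<epsilon>"
    using assms(3) by (simp add: real_sqrt_mult)
  finally show ?thesis .
qed

lemma part_a:
  fixes Dexp Dpi :: "('n::finite,'m::finite) traj measure" and J :: "('n,'m) traj \<Rightarrow> real"
  assumes sD: "sets Dexp = sets (traj_space T)" and sP: "sets Dpi = sets (traj_space T)"
    and Jm: "J \<in> borel_measurable (traj_space T)"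
    and JB: "\<forall>\<rho>\<in>space (traj_space T). \<bar>J \<rho>\<bar> \<le> B"
    and JL: "\<forall>\<rho>\<in>space (traj_space T). \<forall>\<rho>'\<in>space (traj_space T). \<bar>J \<rho> - J \<rho>'\<bar> \<le> L * traj_dist T \<rho> \<rho>'"
    and ep: "\<epsilon> > 0"
  shows "ennreal \<bar>(\<integral>\<rho>. J \<rho> \<partial>Dexp) - (\<integral>\<rho>. J \<rho> \<partial>Dpi)\<bar>
           \<le> ennreal (sqrt (2 * real T) * L * \<epsilon>) + ennreal (2 * B) * Imit_joint T \<epsilon> Dexp Dpi"
proof -
  obtain \<rho>0 where "\<rho>0 \<in> space (traj_space T :: ('n,'m) traj measure)" using traj_space_ne by blast
  then have B0: "0 \<le> B" using JB by (meson abs_ge_zero order_trans)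
  show ?thesis
  proof (cases "couplings T Dexp Dpi = {}")
    case True
    then have I: "Imit_joint T \<epsilon> Dexp Dpi = top" by (simp add: Imit_joint_def)
    show ?thesis
    proof (cases "B = 0")
      case True
      then have J0: "\<And>\<rho>. \<rho> \<in> space (traj_space T) \<Longrightarrow> J \<rho> = 0" using JB by force
      have "(\<integral>\<rho>. J \<rho> \<partial>Dexp) = (\<integral>\<rho>. 0 \<partial>Dexp)"
        by (rule Bochner_Integration.integral_cong) (use J0 sets_eq_imp_space_eq[OF sD] in auto)
      moreover have "(\<integral>\<rho>. J \<rho> \<partial>Dpi) = (\<integral>\<rho>. 0 \<partial>Dpi)"
        by (rule Bochner_Integration.integral_cong) (use J0 sets_eq_imp_space_eq[OF sP] in auto)
      ultimately show ?thesis by simp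
    next
      case False
      then show ?thesis using B0 I by (simp add: ennreal_mult_top)
    qed
  next
    case ne: False
    let ?C = "max 0 (L * (sqrt (2 * real T) * \<epsilon>))"
    let ?E = "\<lambda>\<mu>. {z\<in>space \<mu>. \<exists>t\<in>{1..T}. max (dist (fst (fst z) (t+1)) (fst (snd z) (t+1))) (dist (snd (fst z) t) (snd (snd z) t)) > \<epsilon>}"
    have "ennreal \<bar>(\<integral>\<rho>. J \<rho> \<partial>Dexp) - (\<integral>\<rho>. J \<rho> \<partial>Dpi)\<bar>
           \<le> ennreal (2 * B) * Imit_joint T \<epsilon> Dexp Dpi + ennreal ?C"
      unfolding Imit_joint_def
    proof (rule INF_bound_ennreal[OF ne])
      fix \<mu> assume mu: "\<mu> \<in> couplings T Dexp Dpi"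
      note cf = coupling_facts[OF mu]
      note cd = coupling_diff[OF mu Jm JB]
      have Em: "?E \<mu> \<in> sets \<mu>"
      proof -
        have "?E \<mu> = (\<Union>t\<in>{1..T}. {z\<in>space (traj_space T \<Otimes>\<^sub>M traj_space T).
           max (dist (fst (fst z) (t+1)) (fst (snd z) (t+1))) (dist (snd (fst z) t) (snd (snd z) t)) > \<epsilon>})"
          unfolding cf(3) by auto
        also have "\<dots> \<in> sets (traj_space T \<Otimes>\<^sub>M traj_space T)"
          by (intro sets.finite_UN ev_meas) auto
        finally show ?thesis unfolding cf(2) .
      qed
      have sp: "\<And>z. z \<in> space \<mu> \<Longrightarrow> fst z \<in> space (traj_space T) \<and> snd z \<in> space (traj_space T)"
        unfolding cf(3) by (auto simp: space_pair_measure)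
      show "ennreal \<bar>(\<integral>\<rho>. J \<rho> \<partial>Dexp) - (\<integral>\<rho>. J \<rho> \<partial>Dpi)\<bar>
           \<le> ennreal (2 * B) * emeasure \<mu> (?E \<mu>) + ennreal ?C"
        unfolding cd(1)
      proof (rule coupling_core[OF cf(1) cd(2)])
        show "\<forall>z\<in>space \<mu>. \<bar>J (fst z) - J (snd z)\<bar> \<le> 2 * B"
        proof
          fix z assume "z \<in> space \<mu>"
          then have "\<bar>J (fst z)\<bar> \<le> B" "\<bar>J (snd z)\<bar> \<le> B" using JB sp by auto
          then show "\<bar>J (fst z) - J (snd z)\<bar> \<le> 2 * B" by linarith
        qed
        show "AE z in \<mu>. z \<notin> ?E \<mu> \<longrightarrow> \<bar>J (fst z) - J (snd z)\<bar> \<le> ?C"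
          using AE_space cf(6)
        proof eventually_elim
          case (elim z)
          show ?case
          proof
            assume "z \<notin> ?E \<mu>"
            then have "traj_dist T (fst z) (snd z) \<le> sqrt (2 * real T) * \<epsilon>"
              using elim ep by (intro traj_dist_bound) auto
            moreover have "0 \<le> traj_dist T (fst z) (snd z)" unfolding traj_dist_def by (intro real_sqrt_ge_zero add_nonneg_nonneg sum_nonneg) auto
            ultimately show "\<bar>J (fst z) - J (snd z)\<bar> \<le> ?C"
              using JL sp[OF elim(1)] by (intro lip_bound) auto
          qed
        qed
      qed (use Em B0 in auto)
    qed
    then show ?thesis by (simp add: ennreal_max_0 ac_simps)
  qed
qed

lemma part_b_s:
  fixes Dexp Dpi :: "('n::finite,'m::finite) traj measure"
    and c :: "nat \<Rightarrow> real^'n \<Rightarrow> real" and c' :: "nat \<Rightarrow> real^'m \<Rightarrow> real"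
  assumes hc: "\<forall>t\<in>{1..T+1}. \<forall>x y. \<bar>c t x - c t y\<bar> \<le> L * dist x y \<and> \<bar>c t x\<bar> \<le> B"
    and hc': "\<forall>t\<in>{1..T}. \<forall>x y. \<bar>c' t x - c' t y\<bar> \<le> L * dist x y \<and> \<bar>c' t x\<bar> \<le> B"
    and s: "s \<in> {1..T}" and ne: "couplings T Dexp Dpi \<noteq> {}" and ep: "\<epsilon> > 0"
  shows "ennreal \<bar>(\<integral>\<rho>. c (s+1) (fst \<rho> (s+1)) + c' s (snd \<rho> s) \<partial>Dexp) - (\<integral>\<rho>. c (s+1) (fst \<rho> (s+1)) + c' s (snd \<rho> s) \<partial>Dpi)\<bar>
     \<le> ennreal (4 * B) * (INF \<mu>\<in>couplings T Dexp Dpi. emeasure \<mu> {z\<in>space \<mu>.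
       max (dist (fst (fst z) (s+1)) (fst (snd z) (s+1))) (dist (snd (fst z) s) (snd (snd z) s)) > \<epsilon>})
       + ennreal (2 * max 0 (L * \<epsilon>))"
proof -
  have hc1: "\<forall>x y. \<bar>c (s+1) x - c (s+1) y\<bar> \<le> L * dist x y \<and> \<bar>c (s+1) x\<bar> \<le> B" using hc s by auto
  have hc2: "\<forall>x y. \<bar>c' s x - c' s y\<bar> \<le> L * dist x y \<and> \<bar>c' s x\<bar> \<le> B" using hc' s by auto
  have B0: "0 \<le> B" using hc1 by (meson abs_ge_zero order_trans)
  have cm1: "c (s+1) \<in> borel_measurable borel" using hc1 by (intro lip_meas[of _ L]) auto
  have cm2: "c' s \<in> borel_measurable borel" using hc2 by (intro lip_meas[of _ L]) auto
  have xm: "(\<lambda>\<rho>. fst \<rho> (s+1)) \<in> (traj_space T :: ('n,'m) traj measure) \<rightarrow>\<^sub>M borel" using s by (intro meas_x) auto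
  have um: "(\<lambda>\<rho>. snd \<rho> s) \<in> (traj_space T :: ('n,'m) traj measure) \<rightarrow>\<^sub>M borel" using s by (intro meas_u) auto
  have gm: "(\<lambda>\<rho>. c (s+1) (fst \<rho> (s+1)) + c' s (snd \<rho> s)) \<in> borel_measurable (traj_space T)"
    using cm1 cm2 xm um by measurable
  have gB: "\<forall>\<rho>\<in>space (traj_space T). \<bar>c (s+1) (fst \<rho> (s+1)) + c' s (snd \<rho> s)\<bar> \<le> 2 * B"
  proof
    fix \<rho> :: "('n,'m) traj"
    have "\<bar>c (s+1) (fst \<rho> (s+1))\<bar> \<le> B" "\<bar>c' s (snd \<rho> s)\<bar> \<le> B" using hc1 hc2 by auto
    then show "\<bar>c (s+1) (fst \<rho> (s+1)) + c' s (snd \<rho> s)\<bar> \<le> 2 * B" by linarith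
  qed
  let ?C = "2 * max 0 (L * \<epsilon>)"
  show ?thesis
  proof (rule INF_bound_ennreal[OF ne])
    fix \<mu> assume mu: "\<mu> \<in> couplings T Dexp Dpi"
    note cf = coupling_facts[OF mu]
    note cd = coupling_diff[OF mu gm gB]
    have Em: "{z\<in>space \<mu>. max (dist (fst (fst z) (s+1)) (fst (snd z) (s+1))) (dist (snd (fst z) s) (snd (snd z) s)) > \<epsilon>} \<in> sets \<mu>"
      unfolding cf(2) cf(3) using s by (rule ev_meas)
    show "ennreal \<bar>(\<integral>\<rho>. c (s+1) (fst \<rho> (s+1)) + c' s (snd \<rho> s) \<partial>Dexp) - (\<integral>\<rho>. c (s+1) (fst \<rho> (s+1)) + c' s (snd \<rho> s) \<partial>Dpi)\<bar>
      \<le> ennreal (4 * B) * emeasure \<mu> {z\<in>space \<mu>. max (dist (fst (fst z) (s+1)) (fst (snd z) (s+1))) (dist (snd (fst z) s) (snd (snd z) s)) > \<epsilon>} + ennreal ?C"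
      unfolding cd(1)
    proof (rule coupling_core[OF cf(1) cd(2)])
      show "\<forall>z\<in>space \<mu>. \<bar>c (s + 1) (fst (fst z) (s + 1)) + c' s (snd (fst z) s) - (c (s + 1) (fst (snd z) (s + 1)) + c' s (snd (snd z) s))\<bar> \<le> 4 * B"
      proof
        fix z
        have "\<bar>c (s+1) (fst (fst z) (s+1))\<bar> \<le> B" "\<bar>c' s (snd (fst z) s)\<bar> \<le> B"
          "\<bar>c (s+1) (fst (snd z) (s+1))\<bar> \<le> B" "\<bar>c' s (snd (snd z) s)\<bar> \<le> B" using hc1 hc2 by auto
        then show "\<bar>c (s + 1) (fst (fst z) (s + 1)) + c' s (snd (fst z) s) - (c (s + 1) (fst (snd z) (s + 1)) + c' s (snd (snd z) s))\<bar> \<le> 4 * B"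
          by linarith
      qed
      show "AE z in \<mu>. z \<notin> {z\<in>space \<mu>. max (dist (fst (fst z) (s+1)) (fst (snd z) (s+1))) (dist (snd (fst z) s) (snd (snd z) s)) > \<epsilon>} \<longrightarrow>
         \<bar>c (s + 1) (fst (fst z) (s + 1)) + c' s (snd (fst z) s) - (c (s + 1) (fst (snd z) (s + 1)) + c' s (snd (snd z) s))\<bar> \<le> ?C"
        using AE_space
      proof eventually_elim
        case (elim z)
        show ?case
        proof
          assume "z \<notin> {z\<in>space \<mu>. max (dist (fst (fst z) (s+1)) (fst (snd z) (s+1))) (dist (snd (fst z) s) (snd (snd z) s)) > \<epsilon>}"
          then have d1: "dist (fst (fst z) (s+1)) (fst (snd z) (s+1)) \<le> \<epsilon>" and d2: "dist (snd (fst z) s) (snd (snd z) s) \<le> \<epsilon>"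
            using elim by auto
          have "\<bar>c (s+1) (fst (fst z) (s+1)) - c (s+1) (fst (snd z) (s+1))\<bar> \<le> max 0 (L * \<epsilon>)"
            using hc1 d1 by (intro lip_bound) auto
          moreover have "\<bar>c' s (snd (fst z) s) - c' s (snd (snd z) s)\<bar> \<le> max 0 (L * \<epsilon>)"
            using hc2 d2 by (intro lip_bound) auto
          ultimately show "\<bar>c (s + 1) (fst (fst z) (s + 1)) + c' s (snd (fst z) s) - (c (s + 1) (fst (snd z) (s + 1)) + c' s (snd (snd z) s))\<bar> \<le> ?C"
            by linarith
        qed
      qed
    qed (use Em B0 in auto)
  qed
qed

lemma part_b:
  fixes Dexp Dpi :: "('n::finite,'m::finite) traj measure"
    and c :: "nat \<Rightarrow> real^'n \<Rightarrow> real" and c' :: "nat \<Rightarrow> real^'m \<Rightarrow> real"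
  assumes T1: "1 \<le> T"
    and hc: "\<forall>t\<in>{1..T+1}. \<forall>x y. \<bar>c t x - c t y\<bar> \<le> L * dist x y \<and> \<bar>c t x\<bar> \<le> B"
    and hc': "\<forall>t\<in>{1..T}. \<forall>x y. \<bar>c' t x - c' t y\<bar> \<le> L * dist x y \<and> \<bar>c' t x\<bar> \<le> B"
    and ep: "\<epsilon> > 0"
  shows "(let J = (\<lambda>\<rho>. c (T+1) (fst \<rho> (T+1)) + (\<Sum>t=1..T. c t (fst \<rho> t) + c' t (snd \<rho> t)))
            in ennreal \<bar>(\<integral>\<rho>. J \<rho> \<partial>Dexp) - (\<integral>\<rho>. J \<rho> \<partial>Dpi)\<bar>
               \<le> ennreal (4 * real T * B) * Imit_marg T \<epsilon> Dexp Dpi + ennreal (2 * real T * L * \<epsilon>))"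
proof -
  define J where "J = (\<lambda>\<rho>::('n,'m) traj. c (T+1) (fst \<rho> (T+1)) + (\<Sum>t=1..T. c t (fst \<rho> t) + c' t (snd \<rho> t)))"
  define g where "g = (\<lambda>s (\<rho>::('n,'m) traj). c (s+1) (fst \<rho> (s+1)) + c' s (snd \<rho> s))"
  define g0 where "g0 = (\<lambda>\<rho>::('n,'m) traj. c 1 (fst \<rho> 1))"
  have B0: "0 \<le> B" using hc by (meson abs_ge_zero order_trans atLeastAtMost_iff le_add2 order_refl)
  have Jeq: "J = (\<lambda>\<rho>. g0 \<rho> + (\<Sum>s=1..T. g s \<rho>))"
  proof
    fix \<rho> :: "('n,'m) traj"
    have "(\<Sum>t=1..T. c t (fst \<rho> t)) + c (T+1) (fst \<rho> (T+1)) = (\<Sum>t=1..Suc T. c t (fst \<rho> t))"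
      using T1 by (simp add: sum.cl_ivl_Suc)
    also have "\<dots> = c 1 (fst \<rho> 1) + (\<Sum>t=Suc 1..Suc T. c t (fst \<rho> t))"
      by (subst sum.atLeast_Suc_atMost) auto
    also have "\<dots> = c 1 (fst \<rho> 1) + (\<Sum>s=1..T. c (s+1) (fst \<rho> (s+1)))"
      by (subst sum.shift_bounds_cl_Suc_ivl) simp
    finally show "J \<rho> = g0 \<rho> + (\<Sum>s=1..T. g s \<rho>)"
      unfolding J_def g_def g0_def by (simp add: sum.distrib)
  qed
  let ?M = "Imit_marg T \<epsilon> Dexp Dpi"
  let ?I = "\<lambda>s. INF \<mu>\<in>couplings T Dexp Dpi. emeasure \<mu> {z\<in>space \<mu>.
       max (dist (fst (fst z) (s+1)) (fst (snd z) (s+1))) (dist (snd (fst z) s) (snd (snd z) s)) > \<epsilon>}"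
  have "ennreal \<bar>(\<integral>\<rho>. J \<rho> \<partial>Dexp) - (\<integral>\<rho>. J \<rho> \<partial>Dpi)\<bar>
               \<le> ennreal (4 * real T * B) * ?M + ennreal (2 * real T * max 0 (L * \<epsilon>))"
  proof (cases "couplings T Dexp Dpi = {}")
    case True
    show ?thesis
    proof (cases "B = 0")
      case True
      have "J \<rho> = 0" for \<rho>
        unfolding J_def using hc hc' True by (auto intro!: sum.neutral)
      then show ?thesis by simp
    next
      case False
      have "?M = top" using \<open>couplings T Dexp Dpi = {}\<close> T1 by (simp add: Imit_marg_def)
      then show ?thesis using B0 False T1 by (simp add: ennreal_mult_top)
    qed
  next
    case False
    then obtain \<mu>0 where mu0: "\<mu>0 \<in> couplings T Dexp Dpi" by blast
    note cf = coupling_facts[OF mu0]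
    have PQ: "prob_space P \<and> sets P = sets (traj_space T)" if "P = Dexp \<or> P = Dpi" for P
      using that cf(1,4,5,7,8) by (auto intro!: prob_space.prob_space_distr)
    have lip_c: "c t \<in> borel_measurable borel" if "t \<in> {1..T+1}" for t
      using hc that by (intro lip_meas[of _ L]) auto
    have lip_c': "c' t \<in> borel_measurable borel" if "t \<in> {1..T}" for t
      using hc' that by (intro lip_meas[of _ L]) auto
    have g0m: "g0 \<in> borel_measurable (traj_space T)"
    proof -
      have "c 1 \<in> borel_measurable borel" "(\<lambda>\<rho>. fst \<rho> 1) \<in> (traj_space T :: ('n,'m) traj measure) \<rightarrow>\<^sub>M borel"
        by (auto intro!: lip_c meas_x)
      then show ?thesis unfolding g0_def by measurable
    qed
    have gsm: "g s \<in> borel_measurable (traj_space T)" if "s \<in> {1..T}" for s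
    proof -
      have "c (s+1) \<in> borel_measurable borel" "c' s \<in> borel_measurable borel"
        "(\<lambda>\<rho>. fst \<rho> (s+1)) \<in> (traj_space T :: ('n,'m) traj measure) \<rightarrow>\<^sub>M borel"
        "(\<lambda>\<rho>. snd \<rho> s) \<in> (traj_space T :: ('n,'m) traj measure) \<rightarrow>\<^sub>M borel"
        using that by (auto intro!: lip_c lip_c' meas_x meas_u)
      then show ?thesis unfolding g_def by measurable
    qed
    have g0B: "\<forall>\<rho>\<in>space (traj_space T). \<bar>g0 \<rho>\<bar> \<le> B" using hc unfolding g0_def by auto
    have gB: "\<bar>g s \<rho>\<bar> \<le> 2 * B" if "s \<in> {1..T}" for s \<rho>
    proof -
      have "\<bar>c (s+1) (fst \<rho> (s+1))\<bar> \<le> B" "\<bar>c' s (snd \<rho> s)\<bar> \<le> B" using hc hc' that by auto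
      then show ?thesis unfolding g_def by linarith
    qed
    have int: "integrable P (\<lambda>\<rho>. g0 \<rho>) \<and> (\<forall>s\<in>{1..T}. integrable P (g s))" if "P = Dexp \<or> P = Dpi" for P
    proof -
      interpret prob_space P using PQ[OF that] by simp
      have sP: "sets P = sets (traj_space T)" using PQ[OF that] by simp
      show ?thesis
      proof (intro conjI ballI)
        show "integrable P g0"
          using g0m g0B sets_eq_imp_space_eq[OF sP]
          by (intro integrable_const_bound[where B=B]) (auto simp: measurable_cong_sets[OF sP refl])
        fix s assume "s \<in> {1..T}"
        then show "integrable P (g s)"
          using gsm gB by (intro integrable_const_bound[where B="2*B"]) (auto simp: measurable_cong_sets[OF sP refl])
      qed
    qed
    have split: "(\<integral>\<rho>. J \<rho> \<partial>P) = (\<integral>\<rho>. g0 \<rho> \<partial>P) + (\<Sum>s=1..T. \<integral>\<rho>. g s \<rho> \<partial>P)" if "P = Dexp \<or> P = Dpi" for P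
      unfolding Jeq using int[OF that]
      by (subst Bochner_Integration.integral_add) (auto intro!: Bochner_Integration.integral_sum)
    have D0: "(\<integral>\<rho>. g0 \<rho> \<partial>Dexp) - (\<integral>\<rho>. g0 \<rho> \<partial>Dpi) = 0"
      unfolding coupling_diff(1)[OF mu0 g0m g0B]
      by (rule integral_eq_zero_AE) (use cf(6) in \<open>auto simp: g0_def\<close>)
    have "\<bar>(\<integral>\<rho>. J \<rho> \<partial>Dexp) - (\<integral>\<rho>. J \<rho> \<partial>Dpi)\<bar> = \<bar>\<Sum>s=1..T. (\<integral>\<rho>. g s \<rho> \<partial>Dexp) - (\<integral>\<rho>. g s \<rho> \<partial>Dpi)\<bar>"
      using split[of Dexp] split[of Dpi] D0 by (simp add: sum_subtractf)
    also have "\<dots> \<le> (\<Sum>s=1..T. \<bar>(\<integral>\<rho>. g s \<rho> \<partial>Dexp) - (\<integral>\<rho>. g s \<rho> \<partial>Dpi)\<bar>)"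
      by (rule sum_abs)
    finally have "ennreal \<bar>(\<integral>\<rho>. J \<rho> \<partial>Dexp) - (\<integral>\<rho>. J \<rho> \<partial>Dpi)\<bar>
        \<le> ennreal (\<Sum>s=1..T. \<bar>(\<integral>\<rho>. g s \<rho> \<partial>Dexp) - (\<integral>\<rho>. g s \<rho> \<partial>Dpi)\<bar>)"
      by (rule ennreal_leI)
    also have "\<dots> = (\<Sum>s=1..T. ennreal \<bar>(\<integral>\<rho>. g s \<rho> \<partial>Dexp) - (\<integral>\<rho>. g s \<rho> \<partial>Dpi)\<bar>)"
      by (rule sum_ennreal[symmetric]) simp
    also have "\<dots> \<le> (\<Sum>s=1..T. ennreal (4 * B) * ?M + ennreal (2 * max 0 (L * \<epsilon>)))"
    proof (rule sum_mono)
      fix s assume s: "s \<in> {1..T}"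
      have "ennreal \<bar>(\<integral>\<rho>. g s \<rho> \<partial>Dexp) - (\<integral>\<rho>. g s \<rho> \<partial>Dpi)\<bar> \<le> ennreal (4 * B) * ?I s + ennreal (2 * max 0 (L * \<epsilon>))"
        unfolding g_def by (rule part_b_s[OF hc hc' s False ep])
      also have "\<dots> \<le> ennreal (4 * B) * ?M + ennreal (2 * max 0 (L * \<epsilon>))"
        unfolding Imit_marg_def using s by (intro add_mono mult_left_mono SUP_upper) auto
      finally show "ennreal \<bar>(\<integral>\<rho>. g s \<rho> \<partial>Dexp) - (\<integral>\<rho>. g s \<rho> \<partial>Dpi)\<bar> \<le> ennreal (4 * B) * ?M + ennreal (2 * max 0 (L * \<epsilon>))" .
    qed
    also have "\<dots> = ennreal (real T) * (ennreal (4 * B) * ?M + ennreal (2 * max 0 (L * \<epsilon>)))"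
      by (simp add: ennreal_of_nat_eq_real_of_nat)
    also have "\<dots> = ennreal (4 * real T * B) * ?M + ennreal (2 * real T * max 0 (L * \<epsilon>))"
    proof -
      have e1: "ennreal (real T) * ennreal (4 * B) = ennreal (4 * real T * B)"
        using B0 by (simp add: ennreal_mult[symmetric] mult_ac)
      have e2: "ennreal (real T) * ennreal (2 * max 0 (L * \<epsilon>)) = ennreal (2 * real T * max 0 (L * \<epsilon>))"
        by (simp add: ennreal_mult[symmetric] mult_ac)
      show ?thesis by (simp only: distrib_left mult.assoc[symmetric] e1 e2)
    qed
    finally show ?thesis .
  qed
  moreover have "ennreal (2 * real T * max 0 (L * \<epsilon>)) = ennreal (2 * real T * L * \<epsilon>)"
  proof (cases "0 \<le> L * \<epsilon>")
    case True then show ?thesis by (simp add: mult.assoc)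
  next
    case False
    then have "2 * real T * L * \<epsilon> \<le> 0"
      using mult_nonneg_nonpos[of "2 * real T" "L * \<epsilon>"] by (simp add: mult.assoc)
    then show ?thesis using False by (simp add: ennreal_neg)
  qed
  ultimately show ?thesis unfolding J_def Let_def by simp
qed


theorem proposition9:
  fixes f :: "real^'n \<Rightarrow> real^'m \<Rightarrow> real^'n"
    and Dexp :: "('n::finite,'m::finite) traj measure"
    and \<pi> :: "nat \<Rightarrow> (nat \<Rightarrow> real^'n) \<times> (nat \<Rightarrow> real^'m) \<Rightarrow> (nat \<Rightarrow> ('n,'m) ctrl) measure"
    and H tau_c tau_o T :: nat and \<epsilon> :: real
  assumes "T = H * tau_c" and "1 \<le> H" and "1 \<le> tau_o" and "tau_o \<le> tau_c"
    and "case_prod f \<in> borel_measurable borel"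
    and "prob_space Dexp" and "sets Dexp = sets (traj_space T)"
    and "\<forall>h\<in>{1..H}. \<pi> h \<in> obs_space tau_o \<rightarrow>\<^sub>M prob_algebra (act_space tau_c)"
    and "\<epsilon> > 0"
  defines "Dpi \<equiv> policy_law f Dexp \<pi> T tau_c tau_o H"
  shows
   "(\<forall>(J :: ('n,'m) traj \<Rightarrow> real) B L.
       J \<in> borel_measurable (traj_space T)
       \<and> (\<forall>\<rho>\<in>space (traj_space T). \<bar>J \<rho>\<bar> \<le> B)
       \<and> (\<forall>\<rho>\<in>space (traj_space T). \<forall>\<rho>'\<in>space (traj_space T). \<bar>J \<rho> - J \<rho>'\<bar> \<le> L * traj_dist T \<rho> \<rho>')
       \<longrightarrow> ennreal \<bar>(\<integral>\<rho>. J \<rho> \<partial>Dexp) - (\<integral>\<rho>. J \<rho> \<partial>Dpi)\<bar>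
           \<le> ennreal (sqrt (2 * real T) * L * \<epsilon>) + ennreal (2 * B) * Imit_joint T \<epsilon> Dexp Dpi)
    \<and> (\<forall>(c :: nat \<Rightarrow> real^'n \<Rightarrow> real) (c' :: nat \<Rightarrow> real^'m \<Rightarrow> real) B L.
       (\<forall>t\<in>{1..T+1}. \<forall>x y. \<bar>c t x - c t y\<bar> \<le> L * dist x y \<and> \<bar>c t x\<bar> \<le> B)
       \<and> (\<forall>t\<in>{1..T}. \<forall>x y. \<bar>c' t x - c' t y\<bar> \<le> L * dist x y \<and> \<bar>c' t x\<bar> \<le> B)
       \<longrightarrow> (let J = (\<lambda>\<rho>. c (T+1) (fst \<rho> (T+1)) + (\<Sum>t=1..T. c t (fst \<rho> t) + c' t (snd \<rho> t)))
            in ennreal \<bar>(\<integral>\<rho>. J \<rho> \<partial>Dexp) - (\<integral>\<rho>. J \<rho> \<partial>Dpi)\<bar>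
               \<le> ennreal (4 * real T * B) * Imit_marg T \<epsilon> Dexp Dpi + ennreal (2 * real T * L * \<epsilon>)))
    \<and> (\<forall>(c :: real^'n \<Rightarrow> real) B L.
       (\<forall>x y. \<bar>c x - c y\<bar> \<le> L * dist x y \<and> \<bar>c x\<bar> \<le> B)
       \<longrightarrow> ennreal \<bar>(\<integral>\<rho>. c (fst \<rho> (T+1)) \<partial>Dexp) - (\<integral>\<rho>. c (fst \<rho> (T+1)) \<partial>Dpi)\<bar>
           \<le> ennreal (2 * B) * Imit_fin T \<epsilon> Dexp Dpi + ennreal (L * \<epsilon>))"
proof -
  have T1: "1 \<le> T"
  proof -
    have "1 \<le> tau_c" using assms(3,4) by linarith
    then have "1 * 1 \<le> H * tau_c" using assms(2) by (intro mult_le_mono) auto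
    then show ?thesis using assms(1) by simp
  qed
  have sP: "sets Dpi = sets (traj_space T)"
    unfolding Dpi_def by (rule sets_policy_law) (rule assms(7))
  show ?thesis
  proof (intro conjI allI impI)
    fix J :: "('n,'m) traj \<Rightarrow> real" and B L
    assume h: "J \<in> borel_measurable (traj_space T)
       \<and> (\<forall>\<rho>\<in>space (traj_space T). \<bar>J \<rho>\<bar> \<le> B)
       \<and> (\<forall>\<rho>\<in>space (traj_space T). \<forall>\<rho>'\<in>space (traj_space T). \<bar>J \<rho> - J \<rho>'\<bar> \<le> L * traj_dist T \<rho> \<rho>')"
    then show "ennreal \<bar>(\<integral>\<rho>. J \<rho> \<partial>Dexp) - (\<integral>\<rho>. J \<rho> \<partial>Dpi)\<bar>
           \<le> ennreal (sqrt (2 * real T) * L * \<epsilon>) + ennreal (2 * B) * Imit_joint T \<epsilon> Dexp Dpi"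
      using part_a[OF assms(7) sP _ _ _ assms(9)] by blast
  next
    fix c :: "nat \<Rightarrow> real^'n \<Rightarrow> real" and c' :: "nat \<Rightarrow> real^'m \<Rightarrow> real" and B L
    assume h: "(\<forall>t\<in>{1..T+1}. \<forall>x y. \<bar>c t x - c t y\<bar> \<le> L * dist x y \<and> \<bar>c t x\<bar> \<le> B)
       \<and> (\<forall>t\<in>{1..T}. \<forall>x y. \<bar>c' t x - c' t y\<bar> \<le> L * dist x y \<and> \<bar>c' t x\<bar> \<le> B)"
    then show "let J = (\<lambda>\<rho>. c (T+1) (fst \<rho> (T+1)) + (\<Sum>t=1..T. c t (fst \<rho> t) + c' t (snd \<rho> t)))
            in ennreal \<bar>(\<integral>\<rho>. J \<rho> \<partial>Dexp) - (\<integral>\<rho>. J \<rho> \<partial>Dpi)\<bar>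
               \<le> ennreal (4 * real T * B) * Imit_marg T \<epsilon> Dexp Dpi + ennreal (2 * real T * L * \<epsilon>)"
      using part_b[OF T1 _ _ assms(9)] by blast
  next
    fix c :: "real^'n \<Rightarrow> real" and B L
    assume "\<forall>x y. \<bar>c x - c y\<bar> \<le> L * dist x y \<and> \<bar>c x\<bar> \<le> B"
    then show "ennreal \<bar>(\<integral>\<rho>. c (fst \<rho> (T+1)) \<partial>Dexp) - (\<integral>\<rho>. c (fst \<rho> (T+1)) \<partial>Dpi)\<bar>
           \<le> ennreal (2 * B) * Imit_fin T \<epsilon> Dexp Dpi + ennreal (L * \<epsilon>)"
      using part_c[OF _ assms(9)] by blast
  qed
qed

end
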